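(* Let $I\subset\mathbb R$ be an open interval, $f_l,f_r:I\to\mathbb R$ continuously differentiable, $u_l,u_r\in\mathbb R$, and $f:=f_l+f_r+u_r-u_l$. Suppose $p^*\in I$ satisfies $f(p^* )=0$ and $f'(p^* )\ne0$, and set $u^*:=\frac12\big(u_l+u_r+f_r(p^* )-f_l(p^* )\big)$. Let $\eta\in(0,1)$. Then there exists $\epsilon>0$ such that the following holds. Let real sequences $(p_n),(F_{n,l}),(F_{n,r}),(F'_{n,l}),(F'_{n,r})$ be given, and set $F_n:=F_{n,l}+F_{n,r}+u_r-u_l$, $F'_n:=F'_{n,l}+F'_{n,r}$, with $F'_n\ne0$ and $$p_{n+1}=p_n-\frac{F_n}{F'_n},\qquad u_n=\tfrac12\big(u_l+u_r+F_{n,r}-F_{n,l}\big).$$ Assume $|p_0-p^*|\le\epsilon$, the sequence $(F'_n)$ is bounded, and for every $n$ with $p_n\in I$ and each $k\in\{l,r\}$, $$|F_{n,k}-f_k(p_n)|\le\tfrac16\eta|F_n|,\qquad |F'_{n,k}-f_k'(p_n)|\le\tfrac16\eta|F'_n|.$$ Then $p_n\to p^*$ and $u_n\to u^*$. *)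

theory Defs
  imports "HOL-Analysis.Analysis"
begin

end

theory Submission
  imports Defs
begin

lemma step:
  fixes e F F' m A g' B d eta k :: real
  assumes hF: "F = m*e + A" and hF': "F' = g' + B" and hA: "\<bar>A\<bar> \<le> eta/3*\<bar>F\<bar>"
    and hB: "\<bar>B\<bar> \<le> eta/3*\<bar>F'\<bar>" and hm: "\<bar>m-d\<bar> \<le> k*\<bar>d\<bar>" and hg: "\<bar>g'-d\<bar> \<le> k*\<bar>d\<bar>"
    and nz: "F' \<noteq> 0" and eta: "0<eta" "eta<1" and k: "0\<le>k" "k<1" and d: "d \<noteq> 0"
  shows "\<bar>e - F/F'\<bar> \<le> (eta/3 + (2*k + eta/(3-eta)*(1+k))*(1+eta/3)/(1-k)) * \<bar>e\<bar>"
proof -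
  define s where "s = eta/(3-eta)"
  have s0: "s \<ge> 0" using eta by (simp add: s_def)
  have "\<bar>F\<bar> \<le> \<bar>m\<bar>*\<bar>e\<bar> + \<bar>A\<bar>" using hF by (simp add: abs_mult[symmetric] abs_triangle_ineq)
  hence "\<bar>A\<bar> \<le> eta/3*(\<bar>m\<bar>*\<bar>e\<bar> + \<bar>A\<bar>)" using hA eta
    by (smt (verit) mult_left_mono divide_nonneg_nonneg)
  hence "\<bar>A\<bar>*(3-eta) \<le> eta*(\<bar>m\<bar>*\<bar>e\<bar>)" by (simp add: algebra_simps)
  hence A1: "\<bar>A\<bar> \<le> s*(\<bar>m\<bar>*\<bar>e\<bar>)" using eta unfolding s_def
    by (simp add: field_simps)
  have "\<bar>m\<bar> \<le> \<bar>d\<bar> + k*\<bar>d\<bar>" using hm by linarith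
  hence mb: "\<bar>m\<bar> \<le> (1+k)*\<bar>d\<bar>" by (simp add: algebra_simps)
  have A2: "\<bar>A\<bar> \<le> s*(1+k)*\<bar>d\<bar>*\<bar>e\<bar>"
    using A1 mult_left_mono[OF mult_right_mono[OF mb abs_ge_zero[of e]] s0] by (simp add: mult.assoc)
  have "\<bar>d\<bar> - k*\<bar>d\<bar> \<le> \<bar>g'\<bar>" using hg by linarith
  hence "(1-k)*\<bar>d\<bar> \<le> \<bar>g'\<bar>" by (simp add: algebra_simps)
  also have "\<bar>g'\<bar> \<le> \<bar>F'\<bar> + \<bar>B\<bar>" using hF' by linarith
  also have "\<dots> \<le> (1+eta/3)*\<bar>F'\<bar>" using hB by (simp add: algebra_simps)
  finally have F'b: "(1-k)*\<bar>d\<bar> \<le> (1+eta/3)*\<bar>F'\<bar>" .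
  have eq: "(e - F/F')*F' = e*(g'-m) + e*B - A" using nz hF hF' by (simp add: field_simps)
  have gm: "\<bar>g'-m\<bar> \<le> 2*k*\<bar>d\<bar>" using hm hg by linarith
  have "\<bar>(e - F/F')*F'\<bar> \<le> \<bar>e*(g'-m)\<bar> + \<bar>e*B\<bar> + \<bar>A\<bar>"
    unfolding eq by linarith
  hence "\<bar>e - F/F'\<bar>*\<bar>F'\<bar> \<le> \<bar>e\<bar>*\<bar>g'-m\<bar> + \<bar>e\<bar>*\<bar>B\<bar> + \<bar>A\<bar>"
    by (simp add: abs_mult)
  also have "\<dots> \<le> \<bar>e\<bar>*(2*k*\<bar>d\<bar>) + \<bar>e\<bar>*(eta/3*\<bar>F'\<bar>) + s*(1+k)*\<bar>d\<bar>*\<bar>e\<bar>"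
    using gm hB A2 by (intro add_mono mult_left_mono) auto
  finally have m1: "\<bar>e - F/F'\<bar>*\<bar>F'\<bar> \<le> eta/3*\<bar>e\<bar>*\<bar>F'\<bar> + (2*k + s*(1+k))*\<bar>e\<bar>*\<bar>d\<bar>"
    by (simp add: algebra_simps)
  have Fp: "\<bar>F'\<bar> > 0" using nz by simp
  have C0: "(2*k + s*(1+k))*\<bar>e\<bar> \<ge> 0" using s0 k by simp
  have "\<bar>d\<bar> \<le> (1+eta/3)/(1-k)*\<bar>F'\<bar>" using F'b k by (simp add: field_simps)
  hence "(2*k + s*(1+k))*\<bar>e\<bar>*\<bar>d\<bar> \<le> (2*k + s*(1+k))*\<bar>e\<bar>*((1+eta/3)/(1-k)*\<bar>F'\<bar>)"
    using C0 mult_left_mono by blast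
  moreover have "((eta/3 + (2*k + s*(1+k))*(1+eta/3)/(1-k)) * \<bar>e\<bar>)*\<bar>F'\<bar> = eta/3*\<bar>e\<bar>*\<bar>F'\<bar> + (2*k + s*(1+k))*\<bar>e\<bar>*((1+eta/3)/(1-k)*\<bar>F'\<bar>)"
    using k by (simp add: field_simps)
  ultimately have "\<bar>e - F/F'\<bar>*\<bar>F'\<bar> \<le> ((eta/3 + (2*k + s*(1+k))*(1+eta/3)/(1-k)) * \<bar>e\<bar>)*\<bar>F'\<bar>"
    using m1 by linarith
  thus ?thesis using Fp unfolding s_def by simp
qed

lemma mvt_near:
  fixes g g' :: "real \<Rightarrow> real"
  assumes deriv: "\<And>y. \<bar>y - c\<bar> \<le> \<delta> \<Longrightarrow> (g has_real_derivative g' y) (at y)"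
    and gd: "\<And>y. \<bar>y - c\<bar> \<le> \<delta> \<Longrightarrow> \<bar>g' y - d\<bar> \<le> k*\<bar>d\<bar>"
    and x: "\<bar>x - c\<bar> \<le> \<delta>" and k: "0 \<le> k"
  shows "\<exists>m. g x - g c = m*(x - c) \<and> \<bar>m - d\<bar> \<le> k*\<bar>d\<bar>"
proof (cases x c rule: linorder_cases)
  case less
  obtain z where z: "x < z" "z < c" "g c - g x = (c - x) * g' z"
  proof -
    have "(g has_real_derivative g' y) (at y)" if "x \<le> y" "y \<le> c" for y
      using x that by (intro deriv) arith
    thus ?thesis using MVT2[OF less, of g g'] that by blast
  qed
  have "\<bar>z - c\<bar> \<le> \<delta>" using z x by linarith
  thus ?thesis using z gd by (intro exI[of _ "g' z"]) (auto simp: algebra_simps)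
next
  case equal
  thus ?thesis using k by (intro exI[of _ d]) auto
next
  case greater
  obtain z where z: "c < z" "z < x" "g x - g c = (x - c) * g' z"
  proof -
    have "(g has_real_derivative g' y) (at y)" if "c \<le> y" "y \<le> x" for y
      using x that by (intro deriv) arith
    thus ?thesis using MVT2[OF greater, of g g'] that by blast
  qed
  have "\<bar>z - c\<bar> \<le> \<delta>" using z x by linarith
  thus ?thesis using z gd by (intro exI[of _ "g' z"]) (auto simp: algebra_simps)
qed

lemma errb:
  fixes a b F G eta :: real
  assumes "\<bar>a\<bar> \<le> eta/6*\<bar>F\<bar>" "\<bar>b\<bar> \<le> eta/6*\<bar>F\<bar>" "F = G + a + b" "0<eta" "eta<1"
  shows "\<bar>a\<bar> \<le> \<bar>G\<bar>"
proof -
  have "eta/6*\<bar>F\<bar> \<le> 1/6*\<bar>F\<bar>" using assms by (intro mult_right_mono) auto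
  thus ?thesis using assms by linarith
qed

theorem theorem2:
  fixes I :: "real set"
    and fl fr fl' fr' :: "real \<Rightarrow> real"
    and ul ur pstar eta :: real
  assumes I_open: "open I" and I_interval: "is_interval I"
    and fl_deriv: "\<And>x. x \<in> I \<Longrightarrow> (fl has_real_derivative fl' x) (at x)"
    and fr_deriv: "\<And>x. x \<in> I \<Longrightarrow> (fr has_real_derivative fr' x) (at x)"
    and fl'_cont: "continuous_on I fl'"
    and fr'_cont: "continuous_on I fr'"
    and pstar_in: "pstar \<in> I"
    and f_zero: "fl pstar + fr pstar + ur - ul = 0"
    and f'_nonzero: "fl' pstar + fr' pstar \<noteq> 0"
    and eta: "0 < eta" "eta < 1"
  shows "\<exists>\<epsilon>>0. \<forall>(p :: nat \<Rightarrow> real) (Fl :: nat \<Rightarrow> real) Fr Fl' Fr'.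
           (\<forall>n. Fl' n + Fr' n \<noteq> 0) \<longrightarrow>
           (\<forall>n. p (Suc n) = p n - (Fl n + Fr n + ur - ul) / (Fl' n + Fr' n)) \<longrightarrow>
           \<bar>p 0 - pstar\<bar> \<le> \<epsilon> \<longrightarrow>
           Bseq (\<lambda>n. Fl' n + Fr' n) \<longrightarrow>
           (\<forall>n. p n \<in> I \<longrightarrow>
              \<bar>Fl n - fl (p n)\<bar> \<le> eta / 6 * \<bar>Fl n + Fr n + ur - ul\<bar> \<and>
              \<bar>Fr n - fr (p n)\<bar> \<le> eta / 6 * \<bar>Fl n + Fr n + ur - ul\<bar> \<and>
              \<bar>Fl' n - fl' (p n)\<bar> \<le> eta / 6 * \<bar>Fl' n + Fr' n\<bar> \<and>
              \<bar>Fr' n - fr' (p n)\<bar> \<le> eta / 6 * \<bar>Fl' n + Fr' n\<bar>) \<longrightarrow>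
           p \<longlonglongrightarrow> pstar \<and>
           (\<lambda>n. (ul + ur + Fr n - Fl n) / 2) \<longlonglongrightarrow> (ul + ur + fr pstar - fl pstar) / 2"
proof -
  define g where "g = (\<lambda>x. fl x + fr x + ur - ul)"
  define g' where "g' = (\<lambda>x. fl' x + fr' x)"
  define d where "d = g' pstar"
  have d0: "d \<noteq> 0" using f'_nonzero by (simp add: d_def g'_def)
  have gps: "g pstar = 0" using f_zero by (simp add: g_def)
  define T where "T = (\<lambda>k::real. eta/3 + (2*k + eta/(3-eta)*(1+k))*(1+eta/3)/(1-k))"
  have "T 0 = 2*eta/(3-eta)" using eta by (simp add: T_def field_simps)
  moreover have "2*eta/(3-eta) < 1" using eta by (simp add: field_simps)
  ultimately have T0: "T 0 < 1" by simp
  have "isCont T 0" unfolding T_def by (intro continuous_intros) auto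
  hence "(T \<longlongrightarrow> T 0) (at_right 0)"
    by (metis isCont_def at_within_le_at tendsto_mono)
  hence ev: "eventually (\<lambda>k. T k < 1) (at_right 0)" using T0 order_tendstoD(2) by blast
  have "eventually (\<lambda>k. T k < 1 \<and> k \<in> {0<..<1}) (at_right 0)"
    using eventually_conj[OF ev eventually_at_right_real[of 0 1]] by simp
  then obtain k where k: "T k < 1" "0 < k" "k < 1"
    using eventually_happens[of _ "at_right (0::real)"] by auto
  define \<theta> where "\<theta> = T k"
  have th0: "0 \<le> \<theta>" using eta k unfolding \<theta>_def T_def by (intro add_nonneg_nonneg divide_nonneg_nonneg mult_nonneg_nonneg) auto
  have th1: "\<theta> < 1" using k by (simp add: \<theta>_def)
  obtain \<delta>0 where d0pos: "\<delta>0 > 0" and ball: "ball pstar \<delta>0 \<subseteq> I" using openE[OF I_open pstar_in] by blast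
  have kd: "k*\<bar>d\<bar> > 0" using k d0 by simp
  have gc: "continuous_on I g'" unfolding g'_def using fl'_cont fr'_cont by (intro continuous_on_add)
  obtain \<delta>1 where d1pos: "\<delta>1 > 0" and d1: "\<forall>x'\<in>I. dist x' pstar < \<delta>1 \<longrightarrow> dist (g' x') (g' pstar) < k*\<bar>d\<bar>"
    using continuous_on_iff[THEN iffD1, OF gc, rule_format, OF pstar_in kd] by blast
  define \<delta> where "\<delta> = min \<delta>0 \<delta>1 / 2"
  have dpos: "\<delta> > 0" using d0pos d1pos by (simp add: \<delta>_def)
  have inI: "x \<in> I" if "\<bar>x - pstar\<bar> \<le> \<delta>" for x
  proof -
    have "dist pstar x < \<delta>0" using that d0pos d1pos unfolding \<delta>_def dist_real_def by (simp add: abs_minus_commute)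
    thus ?thesis using ball by auto
  qed
  have gd: "\<bar>g' x - d\<bar> \<le> k*\<bar>d\<bar>" if "\<bar>x - pstar\<bar> \<le> \<delta>" for x
  proof -
    have "dist x pstar < \<delta>1" using that d0pos d1pos unfolding \<delta>_def dist_real_def by simp
    thus ?thesis using d1 inI[OF that] unfolding dist_real_def d_def by fastforce
  qed
  have deriv: "(g has_real_derivative g' x) (at x)" if "x \<in> I" for x
  proof -
    have "((\<lambda>x. fl x + fr x + ur - ul) has_real_derivative (fl' x + fr' x + 0 - 0)) (at x)"
      by (intro derivative_intros fl_deriv fr_deriv that)
    thus ?thesis by (simp add: g_def g'_def)
  qed
  have mvt: "\<exists>m. g x = m*(x - pstar) \<and> \<bar>m - d\<bar> \<le> k*\<bar>d\<bar>" if "\<bar>x - pstar\<bar> \<le> \<delta>" for x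
    using mvt_near[of pstar \<delta> g g' d k x] deriv inI gd that k gps by auto
  show ?thesis
  proof (rule exI[of _ \<delta>], intro conjI allI impI)
    show "0 < \<delta>" by (rule dpos)
    fix p Fl Fr Fl' Fr' :: "nat \<Rightarrow> real"
    assume nz: "\<forall>n. Fl' n + Fr' n \<noteq> 0"
      and rec: "\<forall>n. p (Suc n) = p n - (Fl n + Fr n + ur - ul) / (Fl' n + Fr' n)"
      and p0: "\<bar>p 0 - pstar\<bar> \<le> \<delta>"
      and bs: "Bseq (\<lambda>n. Fl' n + Fr' n)"
      and H: "\<forall>n. p n \<in> I \<longrightarrow>
              \<bar>Fl n - fl (p n)\<bar> \<le> eta / 6 * \<bar>Fl n + Fr n + ur - ul\<bar> \<and>
              \<bar>Fr n - fr (p n)\<bar> \<le> eta / 6 * \<bar>Fl n + Fr n + ur - ul\<bar> \<and>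
              \<bar>Fl' n - fl' (p n)\<bar> \<le> eta / 6 * \<bar>Fl' n + Fr' n\<bar> \<and>
              \<bar>Fr' n - fr' (p n)\<bar> \<le> eta / 6 * \<bar>Fl' n + Fr' n\<bar>"
    have near: "\<bar>p n - pstar\<bar> \<le> \<delta>" if "\<bar>p n - pstar\<bar> \<le> \<theta>^n * \<bar>p 0 - pstar\<bar>" for n
    proof -
      have "\<theta>^n \<le> 1" using th0 th1 by (simp add: power_le_one)
      hence "\<theta>^n * \<bar>p 0 - pstar\<bar> \<le> \<bar>p 0 - pstar\<bar>" using mult_right_mono[of "\<theta>^n" 1 "\<bar>p 0 - pstar\<bar>"] by simp
      thus ?thesis using that p0 by linarith
    qed
    have bound: "\<bar>p n - pstar\<bar> \<le> \<theta>^n * \<bar>p 0 - pstar\<bar>" for n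
    proof (induct n)
      case 0 thus ?case by simp
    next
      case (Suc n)
      have e: "\<bar>p n - pstar\<bar> \<le> \<delta>" using near[OF Suc] .
      have Hn: "\<bar>Fl n - fl (p n)\<bar> \<le> eta / 6 * \<bar>Fl n + Fr n + ur - ul\<bar>"
              "\<bar>Fr n - fr (p n)\<bar> \<le> eta / 6 * \<bar>Fl n + Fr n + ur - ul\<bar>"
              "\<bar>Fl' n - fl' (p n)\<bar> \<le> eta / 6 * \<bar>Fl' n + Fr' n\<bar>"
              "\<bar>Fr' n - fr' (p n)\<bar> \<le> eta / 6 * \<bar>Fl' n + Fr' n\<bar>"
        using H inI[OF e] by auto
      obtain m where m: "g (p n) = m*(p n - pstar)" "\<bar>m - d\<bar> \<le> k*\<bar>d\<bar>" using mvt[OF e] by blast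
      define F where "F = Fl n + Fr n + ur - ul"
      define F' where "F' = Fl' n + Fr' n"
      define A where "A = (Fl n - fl (p n)) + (Fr n - fr (p n))"
      define B where "B = (Fl' n - fl' (p n)) + (Fr' n - fr' (p n))"
      have hF: "F = m*(p n - pstar) + A" using m(1) by (simp add: F_def A_def g_def)
      have hF': "F' = g' (p n) + B" by (simp add: F'_def B_def g'_def)
      have hA: "\<bar>A\<bar> \<le> eta/3*\<bar>F\<bar>" using Hn(1,2) unfolding A_def F_def by linarith
      have hB: "\<bar>B\<bar> \<le> eta/3*\<bar>F'\<bar>" using Hn(3,4) unfolding B_def F'_def by linarith
      have "\<bar>(p n - pstar) - F/F'\<bar> \<le> \<theta> * \<bar>p n - pstar\<bar>"
        unfolding \<theta>_def T_def
        by (rule step[OF hF hF' hA hB m(2) gd[OF e]]) (use nz eta k d0 in \<open>auto simp: F'_def\<close>)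
      moreover have "p (Suc n) - pstar = (p n - pstar) - F/F'" using rec by (simp add: F_def F'_def)
      ultimately have "\<bar>p (Suc n) - pstar\<bar> \<le> \<theta> * \<bar>p n - pstar\<bar>" by simp
      also have "\<dots> \<le> \<theta> * (\<theta>^n * \<bar>p 0 - pstar\<bar>)" using Suc th0 by (intro mult_left_mono)
      finally show ?case by simp
    qed
    have pI: "p n \<in> I" for n using inI[OF near[OF bound]] .
    have "norm \<theta> < 1" using th0 th1 by simp
    hence tl: "(\<lambda>n. \<theta>^n * \<bar>p 0 - pstar\<bar>) \<longlonglongrightarrow> 0"
      by (rule tendsto_mult_left_zero[OF LIMSEQ_power_zero])
    have "(\<lambda>n. p n - pstar) \<longlonglongrightarrow> 0"
      by (rule Lim_null_comparison[OF always_eventually tl]) (simp add: bound)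
    thus pc: "p \<longlonglongrightarrow> pstar" by (simp add: LIM_zero_iff)
    have "isCont g pstar" using deriv[OF pstar_in] by (rule DERIV_isCont)
    hence "(\<lambda>n. g (p n)) \<longlonglongrightarrow> g pstar" using pc by (rule isCont_tendsto_compose)
    hence gl: "(\<lambda>n. \<bar>g (p n)\<bar>) \<longlonglongrightarrow> 0" using gps tendsto_rabs by fastforce
    have Hn: "\<bar>Fl n - fl (p n)\<bar> \<le> eta / 6 * \<bar>Fl n + Fr n + ur - ul\<bar>"
              "\<bar>Fr n - fr (p n)\<bar> \<le> eta / 6 * \<bar>Fl n + Fr n + ur - ul\<bar>" for n
        using H pI by auto
    have el: "(\<lambda>n. Fl n - fl (p n)) \<longlonglongrightarrow> 0"
      by (rule Lim_null_comparison[OF _ gl], rule always_eventually, rule allI,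
          simp only: real_norm_def, rule errb[OF Hn(1) Hn(2) _ eta]) (simp add: g_def)
    have er: "(\<lambda>n. Fr n - fr (p n)) \<longlonglongrightarrow> 0"
      by (rule Lim_null_comparison[OF _ gl], rule always_eventually, rule allI,
          simp only: real_norm_def, rule errb[OF Hn(2) Hn(1) _ eta]) (simp add: g_def)
    have fll: "(\<lambda>n. fl (p n)) \<longlonglongrightarrow> fl pstar"
      using isCont_tendsto_compose[OF DERIV_isCont[OF fl_deriv[OF pstar_in]] pc] .
    have frl: "(\<lambda>n. fr (p n)) \<longlonglongrightarrow> fr pstar"
      using isCont_tendsto_compose[OF DERIV_isCont[OF fr_deriv[OF pstar_in]] pc] .
    have "(\<lambda>n. (ul + ur + ((Fr n - fr (p n)) + fr (p n)) - ((Fl n - fl (p n)) + fl (p n))) / 2)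
          \<longlonglongrightarrow> (ul + ur + (0 + fr pstar) - (0 + fl pstar)) / 2"
      by (intro tendsto_intros el er fll frl) simp
    thus "(\<lambda>n. (ul + ur + Fr n - Fl n) / 2) \<longlonglongrightarrow> (ul + ur + fr pstar - fl pstar) / 2" by simp
  qed
qed

end
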